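(* Let $\mathsf{D}$ and $\mathsf{S}$ be optiongraphs, and suppose there are congruence relations $\theta$ on $\mathsf{D}$ and $\psi$ on $\mathsf{S}$ with $\mathsf{D}/\theta\cong\mathsf{S}/\psi$. Then the minimum quotients $\mathsf{D}/{\bowtie_\mathsf{D}}$ and $\mathsf{S}/{\bowtie_\mathsf{S}}$ are isomorphic.
   Context: An optiongraph is a nonempty set $\mathsf{D}$ of positions with an option function $\mathrm{Opt}_\mathsf{D}:\mathsf{D}\to 2^{\mathsf{D}}$. A map is option preserving if $\mathrm{Opt}_\mathsf{D}(f(p))=f(\mathrm{Opt}_\mathsf{C}(p))$; an isomorphism ($\cong$) is a bijective option-preserving map. For an equivalence relation $\theta$, $[p]_\theta$ is the class of $p$ and $[S]_\theta:=\{[s]_\theta\mid s\in S\}$; $\theta$ is a congruence relation if $p\mathrel{\theta}q$ implies $[\mathrm{Opt}(p)]_\theta=[\mathrm{Opt}(q)]_\theta$. The quotient $\mathsf{D}/\theta$ has positions the $\theta$-classes and $\mathrm{Opt}([p]_\theta):=[\mathrm{Opt}_\mathsf{D}(p)]_\theta$. For an optiongraph $\mathsf{E}$, $\bowtie_\mathsf{E}$ is the union of all congruence relations on $\mathsf{E}$ (the maximum congruence) and $\mathsf{E}/{\bowtie_\mathsf{E}}$ is its minimum quotient. *)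

theory Defs
  imports Main
begin

definition optiongraph :: "'a set \<Rightarrow> ('a \<Rightarrow> 'a set) \<Rightarrow> bool" where
  "optiongraph D Opt \<longleftrightarrow> D \<noteq> {} \<and> (\<forall>p\<in>D. Opt p \<subseteq> D)"

definition eclass :: "('a \<times> 'a) set \<Rightarrow> 'a \<Rightarrow> 'a set" where
  "eclass \<theta> p = \<theta> `` {p}"

definition eclasses :: "('a \<times> 'a) set \<Rightarrow> 'a set \<Rightarrow> 'a set set" where
  "eclasses \<theta> S = eclass \<theta> ` S"

definition congruence_rel :: "'a set \<Rightarrow> ('a \<Rightarrow> 'a set) \<Rightarrow> ('a \<times> 'a) set \<Rightarrow> bool" where
  "congruence_rel D Opt \<theta> \<longleftrightarrow> equiv D \<theta> \<and>
     (\<forall>p q. (p, q) \<in> \<theta> \<longrightarrow> eclasses \<theta> (Opt p) = eclasses \<theta> (Opt q))"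

text \<open>Quotient optiongraph D/theta: positions D//theta, options of a class computed
  from any representative (well defined for congruences).\<close>
definition quot_pos :: "'a set \<Rightarrow> ('a \<times> 'a) set \<Rightarrow> 'a set set" where
  "quot_pos D \<theta> = D // \<theta>"

definition quot_opt :: "('a \<Rightarrow> 'a set) \<Rightarrow> ('a \<times> 'a) set \<Rightarrow> 'a set \<Rightarrow> 'a set set" where
  "quot_opt Opt \<theta> X = eclasses \<theta> (Opt (SOME p. p \<in> X))"

definition og_iso :: "'a set \<Rightarrow> ('a \<Rightarrow> 'a set) \<Rightarrow> 'b set \<Rightarrow> ('b \<Rightarrow> 'b set) \<Rightarrow> bool" where
  "og_iso C OptC D OptD \<longleftrightarrow>
     (\<exists>f. bij_betw f C D \<and> (\<forall>p\<in>C. OptD (f p) = f ` OptC p))"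

definition max_cong :: "'a set \<Rightarrow> ('a \<Rightarrow> 'a set) \<Rightarrow> ('a \<times> 'a) set" where
  "max_cong D Opt = \<Union> {\<theta>. congruence_rel D Opt \<theta>}"

end

theory Submission
  imports Defs
begin

lemma ecl_transfer:
  assumes "equiv D \<theta>" "equiv D T" "\<theta> \<subseteq> T" "A \<subseteq> D" "B \<subseteq> D"
    "eclasses \<theta> A = eclasses \<theta> B"
  shows "eclasses T A = eclasses T B"
proof -
  have side: "eclasses T X \<subseteq> eclasses T Y"
    if "X \<subseteq> D" "Y \<subseteq> D" "eclasses \<theta> X = eclasses \<theta> Y" for X Y
  proof
    fix c assume "c \<in> eclasses T X"
    then obtain x where x: "x \<in> X" "c = T `` {x}" by (auto simp: eclasses_def eclass_def)
    have "\<theta> `` {x} \<in> eclasses \<theta> X" using x(1) by (auto simp: eclasses_def eclass_def)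
    then have "\<theta> `` {x} \<in> eclasses \<theta> Y" using that(3) by simp
    then obtain y where y: "y \<in> Y" "\<theta> `` {x} = \<theta> `` {y}" by (auto simp: eclasses_def eclass_def)
    then have "(x, y) \<in> \<theta>" using equiv_class_eq_iff[OF assms(1)] x that by blast
    then have "(x, y) \<in> T" using assms(3) by blast
    then have "T `` {x} = T `` {y}" using equiv_class_eq[OF assms(2)] by blast
    then show "c \<in> eclasses T Y" using x y by (auto simp: eclasses_def eclass_def)
  qed
  show ?thesis using side[of A B] side[of B A] assms by auto
qed

lemma cong_sub: "congruence_rel D Opt \<theta> \<Longrightarrow> \<theta> \<subseteq> D \<times> D"
  unfolding congruence_rel_def equiv_def refl_on_def by blast

lemma cong_max:
  assumes OD: "\<forall>p\<in>D. Opt p \<subseteq> D"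
  shows "congruence_rel D Opt (max_cong D Opt)"
proof -
  let ?M = "max_cong D Opt"
  let ?T = "?M\<^sup>+"
  have idc: "congruence_rel D Opt (Id_on D)"
    unfolding congruence_rel_def by (auto simp: equiv_def refl_on_def sym_def trans_def Id_on_def)
  have MD: "?M \<subseteq> D \<times> D" unfolding max_cong_def using cong_sub by blast
  have idM: "Id_on D \<subseteq> ?M" unfolding max_cong_def using idc by blast
  have symM: "sym ?M" unfolding max_cong_def sym_def congruence_rel_def equiv_def by blast
  have TD: "?T \<subseteq> D \<times> D" using MD trancl_subset_Sigma by blast
  have eqT: "equiv D ?T"
    unfolding equiv_def refl_on_def
    using TD idM r_into_trancl' sym_trancl[OF symM] trans_trancl by blast
  have "eclasses ?T (Opt p) = eclasses ?T (Opt q)" if "(p, q) \<in> ?T" for p q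
    using that
  proof (induction rule: trancl_induct)
    case (base y)
    then obtain \<theta> where th: "congruence_rel D Opt \<theta>" "(p, y) \<in> \<theta>"
      unfolding max_cong_def by blast
    have "\<theta> \<subseteq> ?M" using th unfolding max_cong_def by blast
    then have "\<theta> \<subseteq> ?T" by auto
    moreover have "p \<in> D" "y \<in> D" using th cong_sub by blast+
    ultimately show ?case using ecl_transfer[of D \<theta> ?T "Opt p" "Opt y"] th eqT OD
      unfolding congruence_rel_def by blast
  next
    case (step y z)
    then obtain \<theta> where th: "congruence_rel D Opt \<theta>" "(y, z) \<in> \<theta>"
      unfolding max_cong_def by blast
    have "\<theta> \<subseteq> ?M" using th unfolding max_cong_def by blast
    then have "\<theta> \<subseteq> ?T" by auto
    moreover have "y \<in> D" "z \<in> D" using th cong_sub by blast+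
    ultimately have "eclasses ?T (Opt y) = eclasses ?T (Opt z)"
      using ecl_transfer[of D \<theta> ?T "Opt y" "Opt z"] th eqT OD
      unfolding congruence_rel_def by blast
    then show ?case using step by simp
  qed
  then have cT: "congruence_rel D Opt ?T" using eqT unfolding congruence_rel_def by blast
  then have "?T \<subseteq> ?M" unfolding max_cong_def by blast
  then have "?M = ?T" by auto
  then show ?thesis using cT by simp
qed

lemma max_cong_ge: "congruence_rel D Opt \<phi> \<Longrightarrow> \<phi> \<subseteq> max_cong D Opt"
  unfolding max_cong_def by blast

lemma quot_opt_rep:
  assumes "congruence_rel D Opt \<theta>" "p \<in> D"
  shows "quot_opt Opt \<theta> (\<theta> `` {p}) = eclasses \<theta> (Opt p)"
proof -
  have eq: "equiv D \<theta>" using assms unfolding congruence_rel_def by blast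
  have "p \<in> \<theta> `` {p}" using eq assms(2) equiv_class_self by fast
  then have "(SOME x. x \<in> \<theta> `` {p}) \<in> \<theta> `` {p}" by (rule someI)
  then have "(p, SOME x. x \<in> \<theta> `` {p}) \<in> \<theta>" by simp
  then show ?thesis using assms(1) unfolding quot_opt_def congruence_rel_def by metis
qed

lemma eclasses_sub:
  assumes "A \<subseteq> D" shows "eclasses \<theta> A \<subseteq> D // \<theta>"
  using assms unfolding eclasses_def eclass_def quotient_def by blast

lemma quot_opt_sub:
  assumes "congruence_rel D Opt \<theta>" "\<forall>p\<in>D. Opt p \<subseteq> D"
  shows "\<forall>X\<in>quot_pos D \<theta>. quot_opt Opt \<theta> X \<subseteq> quot_pos D \<theta>"
  unfolding quot_pos_def
proof
  fix X assume "X \<in> D // \<theta>"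
  then obtain p where "p \<in> D" "X = \<theta> `` {p}" by (auto elim: quotientE)
  then show "quot_opt Opt \<theta> X \<subseteq> D // \<theta>"
    using quot_opt_rep[OF assms(1)] eclasses_sub assms(2) by metis
qed

lemma surj_hom_min_iso:
  assumes OD: "\<forall>p\<in>D. OptD p \<subseteq> D" and OE: "\<forall>q\<in>E. OptE q \<subseteq> E"
    and hD: "h ` D = E" and hom: "\<forall>p\<in>D. OptE (h p) = h ` OptD p"
  shows "og_iso (quot_pos D (max_cong D OptD)) (quot_opt OptD (max_cong D OptD))
                (quot_pos E (max_cong E OptE)) (quot_opt OptE (max_cong E OptE))"
proof -
  let ?MD = "max_cong D OptD" and ?ME = "max_cong E OptE"
  have cD: "congruence_rel D OptD ?MD" using cong_max OD by blast
  have cE: "congruence_rel E OptE ?ME" using cong_max OE by blast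
  have eD: "equiv D ?MD" and eE: "equiv E ?ME" using cD cE unfolding congruence_rel_def by auto
  have MEsub: "?ME \<subseteq> E \<times> E" using cE cong_sub by blast
  have MDsub: "?MD \<subseteq> D \<times> D" using cD cong_sub by blast
  define \<phi> where "\<phi> = {(p, q). p \<in> D \<and> q \<in> D \<and> (h p, h q) \<in> ?ME}"
  have "congruence_rel D OptD \<phi>"
  proof -
    have "equiv D \<phi>" using eE hD unfolding \<phi>_def equiv_def refl_on_def sym_def trans_def by blast
    moreover have "eclasses \<phi> (OptD p) = eclasses \<phi> (OptD q)" if "(p, q) \<in> \<phi>" for p q
    proof -
      have pq: "p \<in> D" "q \<in> D" "(h p, h q) \<in> ?ME" using that unfolding \<phi>_def by auto
      have side: "eclasses \<phi> (OptD a) \<subseteq> eclasses \<phi> (OptD b)"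
        if ab: "a \<in> D" "b \<in> D" "(h a, h b) \<in> ?ME" for a b
      proof
        fix c assume "c \<in> eclasses \<phi> (OptD a)"
        then obtain x where x: "x \<in> OptD a" "c = \<phi> `` {x}" by (auto simp: eclasses_def eclass_def)
        have "eclasses ?ME (OptE (h a)) = eclasses ?ME (OptE (h b))"
          using cE ab unfolding congruence_rel_def by blast
        moreover have "h x \<in> OptE (h a)" using hom ab x by auto
        ultimately have "?ME `` {h x} \<in> eclasses ?ME (OptE (h b))"
          by (auto simp: eclasses_def eclass_def)
        then obtain y' where y': "y' \<in> OptE (h b)" "?ME `` {h x} = ?ME `` {y'}"
          by (auto simp: eclasses_def eclass_def)
        then obtain y where y: "y \<in> OptD b" "y' = h y" using hom ab by auto
        have xD: "x \<in> D" "y \<in> D" using OD x y ab by auto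
        then have "h x \<in> E" "h y \<in> E" using hD by auto
        then have "(h x, h y) \<in> ?ME" using y' y equiv_class_eq_iff[OF eE] by blast
        then have "(x, y) \<in> \<phi>" using xD unfolding \<phi>_def by auto
        moreover have "equiv D \<phi>" using \<open>equiv D \<phi>\<close> .
        ultimately have "\<phi> `` {x} = \<phi> `` {y}" using equiv_class_eq by metis
        then show "c \<in> eclasses \<phi> (OptD b)" using x y by (auto simp: eclasses_def eclass_def)
      qed
      have "(h q, h p) \<in> ?ME" using pq eE unfolding equiv_def sym_def by blast
      then show ?thesis using side pq by blast
    qed
    ultimately show ?thesis unfolding congruence_rel_def by blast
  qed
  then have phiM: "\<phi> \<subseteq> ?MD" by (rule max_cong_ge)
  define K where "K = {(p, q). p \<in> D \<and> q \<in> D \<and> h p = h q}"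
  have "congruence_rel D OptD K"
  proof -
    have "equiv D K" unfolding K_def equiv_def refl_on_def sym_def trans_def by auto
    moreover have "eclasses K (OptD p) = eclasses K (OptD q)" if "(p, q) \<in> K" for p q
    proof -
      have side: "eclasses K (OptD a) \<subseteq> eclasses K (OptD b)"
        if ab: "a \<in> D" "b \<in> D" "h a = h b" for a b
      proof
        fix c assume "c \<in> eclasses K (OptD a)"
        then obtain x where x: "x \<in> OptD a" "c = K `` {x}" by (auto simp: eclasses_def eclass_def)
        have "h x \<in> h ` OptD b" using hom ab x by (metis imageI)
        then obtain y where y: "y \<in> OptD b" "h x = h y" by auto
        have "x \<in> D" "y \<in> D" using OD x y ab by auto
        then have "(x, y) \<in> K" using y unfolding K_def by auto
        then have "K `` {x} = K `` {y}" using equiv_class_eq \<open>equiv D K\<close> by metis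
        then show "c \<in> eclasses K (OptD b)" using x y by (auto simp: eclasses_def eclass_def)
      qed
      show ?thesis using side that unfolding K_def by (metis (mono_tags, lifting) case_prodD mem_Collect_eq subset_antisym)
    qed
    ultimately show ?thesis unfolding congruence_rel_def by blast
  qed
  then have KM: "K \<subseteq> ?MD" by (rule max_cong_ge)
  define \<psi> where "\<psi> = (\<lambda>(p, q). (h p, h q)) ` ?MD"
  have "congruence_rel E OptE \<psi>"
  proof -
    have psub: "\<psi> \<subseteq> E \<times> E" using MDsub hD unfolding \<psi>_def by auto
    have refl: "refl_on E \<psi>"
    proof -
      have "(e, e) \<in> \<psi>" if eE': "e \<in> E" for e
      proof -
        obtain p where "p \<in> D" "e = h p" using eE' hD by auto
        moreover have "(p, p) \<in> ?MD" using eD \<open>p \<in> D\<close> unfolding equiv_def refl_on_def by blast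
        ultimately show ?thesis unfolding \<psi>_def by force
      qed
      then show ?thesis unfolding refl_on_def by blast
    qed
    have sym: "sym \<psi>" using eD unfolding \<psi>_def equiv_def sym_def by fast
    have trans: "trans \<psi>"
    proof (rule transI)
      fix a b c assume "(a, b) \<in> \<psi>" "(b, c) \<in> \<psi>"
      then obtain p q q' r where "(p, q) \<in> ?MD" "(q', r) \<in> ?MD" "a = h p" "b = h q" "b = h q'" "c = h r"
        unfolding \<psi>_def by auto
      moreover have "(q, q') \<in> K" using calculation MDsub unfolding K_def by auto
      ultimately have "(p, r) \<in> ?MD" using KM eD unfolding equiv_def trans_def by blast
      then show "(a, c) \<in> \<psi>" unfolding \<psi>_def using \<open>a = h p\<close> \<open>c = h r\<close> by force
    qed
    have eqpsi: "equiv E \<psi>" using psub refl sym trans unfolding equiv_def by blast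
    moreover have "eclasses \<psi> (OptE a) = eclasses \<psi> (OptE b)" if abpsi: "(a, b) \<in> \<psi>" for a b
    proof -
      have side: "eclasses \<psi> (OptE (h p)) \<subseteq> eclasses \<psi> (OptE (h q))"
        if pq: "(p, q) \<in> ?MD" for p q
      proof
        have pqD: "p \<in> D" "q \<in> D" using pq MDsub by auto
        fix c assume "c \<in> eclasses \<psi> (OptE (h p))"
        then obtain u where u: "u \<in> OptE (h p)" "c = \<psi> `` {u}" by (auto simp: eclasses_def eclass_def)
        then obtain x where x: "x \<in> OptD p" "u = h x" using hom pqD by auto
        have "eclasses ?MD (OptD p) = eclasses ?MD (OptD q)" using cD pq unfolding congruence_rel_def by blast
        then have "?MD `` {x} \<in> eclasses ?MD (OptD q)" using x by (auto simp: eclasses_def eclass_def)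
        then obtain y where y: "y \<in> OptD q" "?MD `` {x} = ?MD `` {y}" by (auto simp: eclasses_def eclass_def)
        have "x \<in> D" "y \<in> D" using OD x y pqD by auto
        then have "(x, y) \<in> ?MD" using y equiv_class_eq_iff[OF eD] by blast
        then have "(h x, h y) \<in> \<psi>" unfolding \<psi>_def by force
        then have "\<psi> `` {h x} = \<psi> `` {h y}" using equiv_class_eq eqpsi by metis
        moreover have "h y \<in> OptE (h q)" using hom pqD y by auto
        ultimately show "c \<in> eclasses \<psi> (OptE (h q))" using u x by (auto simp: eclasses_def eclass_def)
      qed
      obtain p q where pq: "(p, q) \<in> ?MD" "a = h p" "b = h q" using abpsi unfolding \<psi>_def by auto
      have "(q, p) \<in> ?MD" using pq eD unfolding equiv_def sym_def by blast
      then show ?thesis using side pq by blast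
    qed
    ultimately show ?thesis unfolding congruence_rel_def by blast
  qed
  then have psiM: "\<psi> \<subseteq> ?ME" by (rule max_cong_ge)
  have key: "(p, q) \<in> ?MD \<longleftrightarrow> (h p, h q) \<in> ?ME" if "p \<in> D" "q \<in> D" for p q
  proof
    assume "(p, q) \<in> ?MD" then have "(h p, h q) \<in> \<psi>" unfolding \<psi>_def by force
    then show "(h p, h q) \<in> ?ME" using psiM by blast
  next
    assume "(h p, h q) \<in> ?ME" then have "(p, q) \<in> \<phi>" using that unfolding \<phi>_def by auto
    then show "(p, q) \<in> ?MD" using phiM by blast
  qed
  define F where "F X = ?ME `` {h (SOME p. p \<in> X)}" for X
  have Frep: "F (?MD `` {p}) = ?ME `` {h p}" if "p \<in> D" for p
  proof -
    have "p \<in> ?MD `` {p}" using eD that equiv_class_self by fast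
    then have "(SOME x. x \<in> ?MD `` {p}) \<in> ?MD `` {p}" by (rule someI)
    then have "(p, SOME x. x \<in> ?MD `` {p}) \<in> ?MD" by simp
    moreover then have "(SOME x. x \<in> ?MD `` {p}) \<in> D" using MDsub by auto
    ultimately have "(h p, h (SOME x. x \<in> ?MD `` {p})) \<in> ?ME" using key that by blast
    then show ?thesis unfolding F_def using equiv_class_eq[OF eE] by metis
  qed
  have bij: "bij_betw F (D // ?MD) (E // ?ME)"
  proof (rule bij_betw_imageI)
    show "inj_on F (D // ?MD)"
    proof (rule inj_onI)
      fix X Y assume "X \<in> D // ?MD" "Y \<in> D // ?MD" "F X = F Y"
      then obtain p q where pq: "p \<in> D" "q \<in> D" "X = ?MD `` {p}" "Y = ?MD `` {q}" "F X = F Y"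
        by (auto elim!: quotientE)
      then have "?ME `` {h p} = ?ME `` {h q}" using Frep by simp
      moreover have "h p \<in> E" "h q \<in> E" using hD pq by auto
      ultimately have "(h p, h q) \<in> ?ME" using equiv_class_eq_iff[OF eE] by blast
      then have "(p, q) \<in> ?MD" using key pq by blast
      then show "X = Y" using pq equiv_class_eq[OF eD] by metis
    qed
    show "F ` (D // ?MD) = E // ?ME"
    proof
      show "F ` (D // ?MD) \<subseteq> E // ?ME"
      proof
        fix Y assume "Y \<in> F ` (D // ?MD)"
        then obtain p where "p \<in> D" "Y = F (?MD `` {p})" by (auto elim!: quotientE)
        then show "Y \<in> E // ?ME" using Frep hD by (auto intro: quotientI)
      qed
      show "E // ?ME \<subseteq> F ` (D // ?MD)"
      proof
        fix Y assume "Y \<in> E // ?ME"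
        then obtain e where "e \<in> E" "Y = ?ME `` {e}" by (auto elim!: quotientE)
        then obtain p where "p \<in> D" "e = h p" using hD by auto
        then show "Y \<in> F ` (D // ?MD)" using Frep \<open>Y = _\<close> by (metis imageI quotientI)
      qed
    qed
  qed
  have opt: "quot_opt OptE ?ME (F X) = F ` quot_opt OptD ?MD X" if XQ: "X \<in> D // ?MD" for X
  proof -
    obtain p where p: "p \<in> D" "X = ?MD `` {p}" using XQ by (auto elim!: quotientE)
    have "quot_opt OptE ?ME (F X) = eclasses ?ME (OptE (h p))"
      using Frep p quot_opt_rep[OF cE] hD by auto
    also have "\<dots> = (\<lambda>x. ?ME `` {h x}) ` OptD p"
      using hom p unfolding eclasses_def eclass_def by auto
    also have "\<dots> = F ` (\<lambda>x. ?MD `` {x}) ` OptD p"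
      using Frep OD p by (auto simp: image_image)
    also have "\<dots> = F ` quot_opt OptD ?MD X"
      using quot_opt_rep[OF cD] p unfolding eclasses_def eclass_def by auto
    finally show ?thesis .
  qed
  show ?thesis unfolding og_iso_def quot_pos_def using bij opt by blast
qed

lemma og_iso_sym:
  assumes "og_iso C OC E OE" "\<forall>p\<in>C. OC p \<subseteq> C"
  shows "og_iso E OE C OC"
proof -
  obtain f where f: "bij_betw f C E" "\<forall>p\<in>C. OE (f p) = f ` OC p"
    using assms(1) unfolding og_iso_def by blast
  let ?g = "the_inv_into C f"
  have "bij_betw ?g E C" using f bij_betw_the_inv_into by blast
  moreover have "OC (?g q) = ?g ` OE q" if qE: "q \<in> E" for q
  proof -
    obtain p where p: "p \<in> C" "q = f p" using f(1) qE unfolding bij_betw_def by blast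
    have inj: "inj_on f C" using f bij_betw_def by blast
    have gq: "?g q = p" using p the_inv_into_f_f[OF inj] by simp
    have gf: "\<forall>x\<in>OC p. ?g (f x) = x" using the_inv_into_f_f[OF inj] assms(2) p by blast
    have "?g ` OE q = ?g ` f ` OC p" using f p by simp
    also have "\<dots> = (\<lambda>x. ?g (f x)) ` OC p" by (simp add: image_image)
    also have "\<dots> = (\<lambda>x. x) ` OC p" using gf by (intro image_cong) auto
    finally have "?g ` OE q = OC p" by simp
    then show ?thesis using gq by simp
  qed
  ultimately show ?thesis unfolding og_iso_def by blast
qed

lemma og_iso_trans:
  assumes "og_iso A OA B OB" "og_iso B OB C OC" "\<forall>p\<in>A. OA p \<subseteq> A"
  shows "og_iso A OA C OC"
proof -
  obtain f where f: "bij_betw f A B" "\<forall>p\<in>A. OB (f p) = f ` OA p"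
    using assms(1) unfolding og_iso_def by blast
  obtain g where g: "bij_betw g B C" "\<forall>p\<in>B. OC (g p) = g ` OB p"
    using assms(2) unfolding og_iso_def by blast
  have "bij_betw (g \<circ> f) A C" by (rule bij_betw_trans[OF f(1) g(1)])
  moreover have "\<forall>p\<in>A. OC ((g \<circ> f) p) = (g \<circ> f) ` OA p"
  proof
    fix p assume p: "p \<in> A"
    then have "f p \<in> B" using bij_betwE[OF f(1)] by blast
    then have "OC (g (f p)) = g ` OB (f p)" using g(2) by blast
    also have "\<dots> = g ` f ` OA p" using f(2) p by simp
    finally show "OC ((g \<circ> f) p) = (g \<circ> f) ` OA p" by (simp add: image_comp)
  qed
  ultimately show ?thesis unfolding og_iso_def by blast
qed

theorem mainTheorem14:
  fixes D :: "'a set" and OptD :: "'a \<Rightarrow> 'a set"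
    and S :: "'b set" and OptS :: "'b \<Rightarrow> 'b set"
    and \<theta> :: "('a \<times> 'a) set" and \<psi> :: "('b \<times> 'b) set"
  assumes "optiongraph D OptD" and "optiongraph S OptS"
    and "congruence_rel D OptD \<theta>" and "congruence_rel S OptS \<psi>"
    and "og_iso (quot_pos D \<theta>) (quot_opt OptD \<theta>) (quot_pos S \<psi>) (quot_opt OptS \<psi>)"
  shows "og_iso (quot_pos D (max_cong D OptD)) (quot_opt OptD (max_cong D OptD))
                (quot_pos S (max_cong S OptS)) (quot_opt OptS (max_cong S OptS))"
proof -
  have OD: "\<forall>p\<in>D. OptD p \<subseteq> D" and OS: "\<forall>p\<in>S. OptS p \<subseteq> S"
    using assms(1,2) unfolding optiongraph_def by auto
  have QD: "\<forall>X\<in>quot_pos D \<theta>. quot_opt OptD \<theta> X \<subseteq> quot_pos D \<theta>"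
    using quot_opt_sub[OF assms(3) OD] .
  have QS: "\<forall>X\<in>quot_pos S \<psi>. quot_opt OptS \<psi> X \<subseteq> quot_pos S \<psi>"
    using quot_opt_sub[OF assms(4) OS] .
  have hD: "\<forall>p\<in>D. quot_opt OptD \<theta> ((\<lambda>x. \<theta> `` {x}) p) = (\<lambda>x. \<theta> `` {x}) ` OptD p"
    using quot_opt_rep[OF assms(3)] unfolding eclasses_def eclass_def by simp
  have hS: "\<forall>p\<in>S. quot_opt OptS \<psi> ((\<lambda>x. \<psi> `` {x}) p) = (\<lambda>x. \<psi> `` {x}) ` OptS p"
    using quot_opt_rep[OF assms(4)] unfolding eclasses_def eclass_def by simp
  have imD: "(\<lambda>x. \<theta> `` {x}) ` D = quot_pos D \<theta>" unfolding quot_pos_def quotient_def by auto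
  have imS: "(\<lambda>x. \<psi> `` {x}) ` S = quot_pos S \<psi>" unfolding quot_pos_def quotient_def by auto
  obtain f where f: "bij_betw f (quot_pos D \<theta>) (quot_pos S \<psi>)"
    "\<forall>p\<in>quot_pos D \<theta>. quot_opt OptS \<psi> (f p) = f ` quot_opt OptD \<theta> p"
    using assms(5) unfolding og_iso_def by (elim exE conjE) (rule that)
  have fim: "f ` quot_pos D \<theta> = quot_pos S \<psi>" using f(1) by (simp add: bij_betw_def)
  note i1 = surj_hom_min_iso[where h="\<lambda>x. \<theta> `` {x}", OF OD QD imD hD]
  note i3 = surj_hom_min_iso[where h="\<lambda>x. \<psi> `` {x}", OF OS QS imS hS]
  note i2 = surj_hom_min_iso[where h=f, OF QD QS fim f(2)]
  have sA: "\<forall>X\<in>quot_pos D (max_cong D OptD). quot_opt OptD (max_cong D OptD) X \<subseteq> quot_pos D (max_cong D OptD)"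
    using quot_opt_sub[OF cong_max[OF OD] OD] .
  have sB: "\<forall>X\<in>quot_pos (quot_pos D \<theta>) (max_cong (quot_pos D \<theta>) (quot_opt OptD \<theta>)).
     quot_opt (quot_opt OptD \<theta>) (max_cong (quot_pos D \<theta>) (quot_opt OptD \<theta>)) X
     \<subseteq> quot_pos (quot_pos D \<theta>) (max_cong (quot_pos D \<theta>) (quot_opt OptD \<theta>))"
    using quot_opt_sub[OF cong_max[OF QD] QD] .
  have sC: "\<forall>X\<in>quot_pos (quot_pos S \<psi>) (max_cong (quot_pos S \<psi>) (quot_opt OptS \<psi>)).
     quot_opt (quot_opt OptS \<psi>) (max_cong (quot_pos S \<psi>) (quot_opt OptS \<psi>)) X
     \<subseteq> quot_pos (quot_pos S \<psi>) (max_cong (quot_pos S \<psi>) (quot_opt OptS \<psi>))"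
    using quot_opt_sub[OF cong_max[OF QS] QS] .
  have sE: "\<forall>X\<in>quot_pos S (max_cong S OptS). quot_opt OptS (max_cong S OptS) X \<subseteq> quot_pos S (max_cong S OptS)"
    using quot_opt_sub[OF cong_max[OF OS] OS] .
  note i3' = og_iso_sym[OF i3 sE]
  show ?thesis using og_iso_trans[OF og_iso_trans[OF i1 i2 sA] i3' sA] .
qed

end
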